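(* Let $\mu$ be a Borel measure on $\mathbb{R}^n$ with $0<\mu(Q)<\infty$ for all $Q\in\mathcal{D}$. For any $f\in L^1_{\mathrm{loc}}(\mu)$ and any $Q\in\mathcal{D}$, $$\|\Delta_Qf\|_{L^1(\mu)}\le2\int_Q|f|\,d\mu.$$ Moreover, if $b\in\mathrm{BMO}(\mu)$, then for all $x$, $$\big|\mathbb{E}_Q(\Delta_Qb\,\Delta_Qf)(x)\big|\le2\,\|b\|_{\mathrm{BMO}}\,\langle|f|\rangle_Q.$$
   Context: $\mathcal{D}$ is the standard dyadic grid in $\mathbb{R}^n$; $\mathrm{ch}(Q)$ are the $2^n$ dyadic children of $Q$, $\widehat Q$ its parent; $\langle f\rangle_Q=\frac1{\mu(Q)}\int_Qf\,d\mu$, $\mathbb{E}_Qf=\langle f\rangle_Q\mathbf 1_Q$, $\Delta_Qf=\sum_{R\in\mathrm{ch}(Q)}\mathbb{E}_Rf-\mathbb{E}_Qf$. $\|b\|_{\mathrm{BMO}}=\sup_{Q\in\mathcal{D}}\frac1{\mu(Q)}\int_Q|b-\langle b\rangle_{\widehat Q}|\,d\mu$. *)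

theory Defs
  imports "HOL-Analysis.Analysis"
begin

definition dcube :: "int \<Rightarrow> ('n::finite \<Rightarrow> int) \<Rightarrow> (real^'n) set" where
  "dcube k j = {x. \<forall>i. real_of_int (j i) / 2 powr (real_of_int k) \<le> x $ i \<and>
                        x $ i < (real_of_int (j i) + 1) / 2 powr (real_of_int k)}"

definition dyadic :: "(real^'n::finite) set set" where
  "dyadic = {dcube k j | k j. True}"

definition dchildren :: "int \<Rightarrow> ('n::finite \<Rightarrow> int) \<Rightarrow> (real^'n) set set" where
  "dchildren k j = {dcube (k+1) j' | j'. \<forall>i. j' i = 2 * j i \<or> j' i = 2 * j i + 1}"

definition dparent :: "int \<Rightarrow> ('n::finite \<Rightarrow> int) \<Rightarrow> (real^'n) set" where
  "dparent k j = dcube (k - 1) (\<lambda>i. j i div 2)"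

definition avg :: "'a measure \<Rightarrow> ('a \<Rightarrow> real) \<Rightarrow> 'a set \<Rightarrow> real" where
  "avg M f Q = (\<integral>x. indicator Q x * f x \<partial>M) / measure M Q"

definition condE :: "'a measure \<Rightarrow> 'a set \<Rightarrow> ('a \<Rightarrow> real) \<Rightarrow> 'a \<Rightarrow> real" where
  "condE M Q f = (\<lambda>x. avg M f Q * indicator Q x)"

definition mdiff :: "(real^'n::finite) measure \<Rightarrow> int \<Rightarrow> ('n \<Rightarrow> int)
    \<Rightarrow> (real^'n \<Rightarrow> real) \<Rightarrow> real^'n \<Rightarrow> real" where
  "mdiff M k j f = (\<lambda>x. (\<Sum>R\<in>dchildren k j. condE M R f x) - condE M (dcube k j) f x)"

definition loc_integrable :: "(real^'n::finite) measure \<Rightarrow> (real^'n \<Rightarrow> real) \<Rightarrow> bool" where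
  "loc_integrable M f \<longleftrightarrow> f \<in> borel_measurable M \<and>
     (\<forall>K. compact K \<longrightarrow> set_integrable M K f)"

text \<open>Dyadic BMO (oscillation measured against the parent average).\<close>
definition bmo_osc :: "(real^'n::finite) measure \<Rightarrow> (real^'n \<Rightarrow> real) \<Rightarrow> int \<Rightarrow> ('n \<Rightarrow> int) \<Rightarrow> real" where
  "bmo_osc M b k j = (\<integral>x. indicator (dcube k j) x * \<bar>b x - avg M b (dparent k j)\<bar> \<partial>M)
                       / measure M (dcube k j)"

definition in_BMO :: "(real^'n::finite) measure \<Rightarrow> (real^'n \<Rightarrow> real) \<Rightarrow> bool" where
  "in_BMO M b \<longleftrightarrow> loc_integrable M b \<and> bdd_above (range (\<lambda>(k, j). bmo_osc M b k j))"

definition bmo_norm :: "(real^'n::finite) measure \<Rightarrow> (real^'n \<Rightarrow> real) \<Rightarrow> real" where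
  "bmo_norm M b = (SUP kj. (\<lambda>(k, j). bmo_osc M b k j) kj)"

end

theory Submission
  imports Defs
begin


lemma dcube_borel: "dcube k j \<in> sets (borel :: (real^'n::finite) measure)"
proof -
  have "dcube k j = (\<Inter>i. {x::real^'n. real_of_int (j i) / 2 powr (real_of_int k) \<le> x $ i} \<inter> {x. x $ i < (real_of_int (j i) + 1) / 2 powr (real_of_int k)})"
    by (auto simp: dcube_def)
  also have "\<dots> \<in> sets borel"
    by measurable
  finally show ?thesis .
qed

lemma floor2: "\<lfloor>y::real\<rfloor> = a \<longleftrightarrow> (\<lfloor>2*y\<rfloor> = 2*a \<or> \<lfloor>2*y\<rfloor> = 2*a+1)"
  by (simp add: floor_eq_iff) linarith

lemma dcube_iff: "x \<in> dcube k j \<longleftrightarrow> (\<forall>i. j i = \<lfloor>x $ i * 2 powr real_of_int k\<rfloor>)"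
proof -
  have p: "(0::real) < 2 powr real_of_int k" by simp
  have e: "\<And>i. (real_of_int (j i) / 2 powr real_of_int k \<le> x $ i \<and> x $ i < (real_of_int (j i) + 1) / 2 powr real_of_int k)
     \<longleftrightarrow> \<lfloor>x $ i * 2 powr real_of_int k\<rfloor> = j i"
    unfolding floor_eq_iff using p by (simp add: pos_divide_le_eq pos_less_divide_eq)
  show ?thesis
    unfolding dcube_def using e by (auto simp del: floor_eq_iff)
qed

lemma dcube_unique: "x \<in> dcube k j1 \<Longrightarrow> x \<in> dcube k j2 \<Longrightarrow> j1 = j2"
  by (auto simp: dcube_iff)

lemma dcube_ne: "dcube k j \<noteq> {}"
proof -
  have "(\<chi> i. real_of_int (j i) / 2 powr real_of_int k) \<in> dcube k j"
    by (simp add: dcube_iff)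
  then show ?thesis by blast
qed

lemma dcube_inj: "dcube k j1 = dcube k j2 \<Longrightarrow> j1 = j2"
  using dcube_ne[of k j1] dcube_unique[of _ k j1 j2] by blast

lemma dcube_iff_succ: "x \<in> dcube (k+1) j \<longleftrightarrow> (\<forall>i. j i = \<lfloor>2 * (x $ i * 2 powr real_of_int k)\<rfloor>)"
proof -
  have "(2::real) powr real_of_int (k+1) = 2 * 2 powr real_of_int k"
    by (simp add: powr_add)
  then show ?thesis unfolding dcube_iff by (simp only: mult.left_commute)
qed

lemma child_iff: "x \<in> dcube k j \<longleftrightarrow>
   (\<exists>j'. (\<forall>i. j' i = 2*j i \<or> j' i = 2*j i+1) \<and> x \<in> dcube (k+1) j')"
proof
  assume "x \<in> dcube k j"
  then have "\<forall>i. j i = \<lfloor>x $ i * 2 powr real_of_int k\<rfloor>" by (simp add: dcube_iff)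
  then have "\<forall>i. \<lfloor>2 * (x $ i * 2 powr real_of_int k)\<rfloor> = 2*j i \<or> \<lfloor>2 * (x $ i * 2 powr real_of_int k)\<rfloor> = 2*j i+1"
    using floor2 by metis
  then show "\<exists>j'. (\<forall>i. j' i = 2*j i \<or> j' i = 2*j i+1) \<and> x \<in> dcube (k+1) j'"
    by (intro exI[of _ "\<lambda>i. \<lfloor>2 * (x $ i * 2 powr real_of_int k)\<rfloor>"]) (simp add: dcube_iff_succ)
next
  assume "\<exists>j'. (\<forall>i. j' i = 2*j i \<or> j' i = 2*j i+1) \<and> x \<in> dcube (k+1) j'"
  then obtain j' where "\<forall>i. j' i = 2*j i \<or> j' i = 2*j i+1" "x \<in> dcube (k+1) j'" by blast
  then have "\<forall>i. \<lfloor>2 * (x $ i * 2 powr real_of_int k)\<rfloor> = 2*j i \<or> \<lfloor>2*(x $ i * 2 powr real_of_int k)\<rfloor> = 2*j i+1"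
    unfolding dcube_iff_succ by metis
  then show "x \<in> dcube k j" using floor2 by (metis dcube_iff)
qed

lemma children_finite: "finite (dchildren k j)"
proof -
  have "{j'. \<forall>i. j' i = 2*j i \<or> j' i = 2*j i+1} = Pi\<^sub>E UNIV (\<lambda>i. {2*j i, 2*j i+1})"
    by (auto simp: PiE_UNIV_domain)
  moreover have "finite (Pi\<^sub>E UNIV (\<lambda>i. {2*j i, 2*j i+1}))"
    by (intro finite_PiE) auto
  ultimately have "finite {j'. \<forall>i. j' i = 2*j i \<or> j' i = 2*j i+1}" by simp
  then have "finite (dcube (k+1) ` {j'. \<forall>i. j' i = 2*j i \<or> j' i = 2*j i+1})" by simp
  moreover have "dchildren k j = dcube (k+1) ` {j'. \<forall>i. j' i = 2*j i \<or> j' i = 2*j i+1}"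
    by (auto simp: dchildren_def)
  ultimately show ?thesis by simp
qed

lemma children_sub: "R \<in> dchildren k j \<Longrightarrow> R \<subseteq> dcube k j"
  using child_iff by (auto simp: dchildren_def)

lemma children_cover: "x \<in> dcube k j \<Longrightarrow> \<exists>R\<in>dchildren k j. x \<in> R"
proof -
  assume "x \<in> dcube k j"
  then obtain j' where "\<forall>i. j' i = 2*j i \<or> j' i = 2*j i+1" "x \<in> dcube (k+1) j'"
    using child_iff by blast
  then show ?thesis unfolding dchildren_def by blast
qed

lemma children_disj: "R1 \<in> dchildren k j \<Longrightarrow> R2 \<in> dchildren k j \<Longrightarrow> x \<in> R1 \<Longrightarrow> x \<in> R2 \<Longrightarrow> R1 = R2"
  using dcube_unique by (auto simp: dchildren_def)

lemma children_parent: "R \<in> dchildren k j \<Longrightarrow> \<exists>j'. R = dcube (k+1) j' \<and> dparent (k+1) j' = dcube k j"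
proof -
  assume "R \<in> dchildren k j"
  then obtain j' where j': "R = dcube (k+1) j'" "\<forall>i. j' i = 2*j i \<or> j' i = 2*j i+1"
    by (auto simp: dchildren_def)
  have "(\<lambda>i. j' i div 2) = j"
  proof
    fix i
    from j'(2) have "j' i = 2*j i \<or> j' i = 2*j i+1" by blast
    then show "j' i div 2 = j i" by presburger
  qed
  then show ?thesis using j' by (auto simp: dparent_def)
qed

lemma sum_ind_in: "R0 \<in> dchildren k j \<Longrightarrow> x \<in> R0 \<Longrightarrow>
   (\<Sum>R\<in>dchildren k j. g R * indicator R x) = (g R0 :: real)"
proof -
  assume a: "R0 \<in> dchildren k j" "x \<in> R0"
  have "(\<Sum>R\<in>dchildren k j. g R * indicator R x) = g R0 * indicator R0 x + (\<Sum>R\<in>dchildren k j - {R0}. g R * indicator R x)"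
    using a by (simp add: sum.remove[OF children_finite a(1)])
  also have "(\<Sum>R\<in>dchildren k j - {R0}. g R * indicator R x) = 0"
  proof (intro sum.neutral ballI)
    fix R assume "R \<in> dchildren k j - {R0}"
    then have "x \<notin> R" using a children_disj[of R k j R0 x] by blast
    then show "g R * indicator R x = 0" by simp
  qed
  finally show ?thesis using a by simp
qed

lemma sum_ind_out: "x \<notin> dcube k j \<Longrightarrow> (\<Sum>R\<in>dchildren k j. g R * indicator R x) = (0::real)"
  using children_sub by (intro sum.neutral) (auto simp: indicator_def)

lemma sum_ind: "(\<Sum>R\<in>dchildren k j. indicator R x) = (indicator (dcube k j) x :: real)"
  using sum_ind_in[of _ k j x "\<lambda>_. 1"] sum_ind_out[of x k j "\<lambda>_. 1"] children_cover[of x k j]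
  by (cases "x \<in> dcube k j") auto



lemma mdiff_alt: "mdiff M k j g x = (\<Sum>R\<in>dchildren k j. (avg M g R - avg M g (dcube k j)) * indicator R x)"
proof -
  have "avg M g (dcube k j) * indicator (dcube k j) x = (\<Sum>R\<in>dchildren k j. avg M g (dcube k j) * indicator R x)"
    by (simp only: sum_distrib_left[symmetric] sum_ind)
  then show ?thesis
    by (simp add: mdiff_def condE_def left_diff_distrib sum_subtractf)
qed

lemma dcube_sub_cbox: "dcube k j \<subseteq> cbox (\<chi> i. real_of_int (j i) / 2 powr real_of_int k) (\<chi> i. (real_of_int (j i) + 1) / 2 powr real_of_int k)"
  by (auto simp: dcube_def mem_box_cart) (meson less_imp_le)

context
  fixes M :: "(real^'n::finite) measure"
  assumes borel: "sets M = sets borel"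
    and pos: "\<And>k' j'. 0 < emeasure M (dcube k' j')"
    and fin: "\<And>k' j'. emeasure M (dcube k' j') < \<infinity>"
begin

lemma spaceM: "space M = UNIV"
  using sets_eq_imp_space_eq[OF borel] by simp

lemma cube_sets: "dcube k j \<in> sets M"
  using borel dcube_borel by simp

lemma child_sets: "R \<in> dchildren k j \<Longrightarrow> R \<in> sets M"
  using cube_sets by (auto simp: dchildren_def)

lemma cube_meas: "0 < measure M (dcube k j)"
proof -
  have "emeasure M (dcube k j) = ennreal (measure M (dcube k j))"
    using fin[of k j] by (intro emeasure_eq_ennreal_measure) simp
  then show ?thesis using pos[of k j] by simp
qed

lemma cube_ind_int: "integrable M (indicator (dcube k j) :: _ \<Rightarrow> real)"
  using cube_sets fin by (rule integrable_real_indicator)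

lemma cube_ind_integral: "integral\<^sup>L M (indicator (dcube k j)) = measure M (dcube k j)"
  by (simp add: spaceM)

lemma cube_int: "loc_integrable M f \<Longrightarrow> integrable M (\<lambda>x. indicator (dcube k j) x * f x)"
proof -
  assume "loc_integrable M f"
  then have "set_integrable M (cbox (\<chi> i. real_of_int (j i) / 2 powr real_of_int k) (\<chi> i. (real_of_int (j i) + 1) / 2 powr real_of_int k)) f"
    unfolding loc_integrable_def using compact_cbox by blast
  then have "set_integrable M (dcube k j) f"
    by (rule set_integrable_subset[OF _ cube_sets dcube_sub_cbox])
  then show ?thesis by (simp add: set_integrable_def)
qed

lemma cube_int_abs: "loc_integrable M f \<Longrightarrow> integrable M (\<lambda>x. indicator (dcube k j) x * \<bar>f x\<bar>)"
proof -
  assume "loc_integrable M f"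
  then have "integrable M (\<lambda>x. \<bar>indicator (dcube k j) x * f x\<bar>)" by (intro integrable_abs cube_int)
  then show ?thesis by (simp add: abs_mult)
qed

lemma avg_mult: "avg M f (dcube k j) * measure M (dcube k j) = (\<integral>x. indicator (dcube k j) x * f x \<partial>M)"
  using cube_meas[of k j] by (simp add: avg_def)

lemma avg_bound: "\<bar>avg M f (dcube k j)\<bar> * measure M (dcube k j) \<le> (\<integral>x. indicator (dcube k j) x * \<bar>f x\<bar> \<partial>M)"
proof -
  have "\<bar>avg M f (dcube k j)\<bar> * measure M (dcube k j) = \<bar>avg M f (dcube k j) * measure M (dcube k j)\<bar>"
    using cube_meas[of k j] by (simp add: abs_mult)
  also have "\<dots> = \<bar>\<integral>x. indicator (dcube k j) x * f x \<partial>M\<bar>" by (simp add: avg_mult)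
  also have "\<dots> \<le> (\<integral>x. \<bar>indicator (dcube k j) x * f x\<bar> \<partial>M)" by (rule integral_abs_bound)
  also have "\<dots> = (\<integral>x. indicator (dcube k j) x * \<bar>f x\<bar> \<partial>M)" by (simp add: abs_mult)
  finally show ?thesis .
qed

lemma child_cube: "R \<in> dchildren k j \<Longrightarrow> \<exists>j'. R = dcube (k+1) j'"
  by (auto simp: dchildren_def)

lemma sum_children_int: "loc_integrable M f \<Longrightarrow>
  (\<Sum>R\<in>dchildren k j. (\<integral>x. indicator R x * f x \<partial>M)) = (\<integral>x. indicator (dcube k j) x * f x \<partial>M)"
proof -
  assume f: "loc_integrable M f"
  have "(\<Sum>R\<in>dchildren k j. (\<integral>x. indicator R x * f x \<partial>M)) = (\<integral>x. (\<Sum>R\<in>dchildren k j. indicator R x * f x) \<partial>M)"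
  proof (rule Bochner_Integration.integral_sum[symmetric])
    fix R assume "R \<in> dchildren k j"
    then obtain j' where "R = dcube (k+1) j'" using child_cube by blast
    then show "integrable M (\<lambda>x. indicator R x * f x)" using cube_int[OF f] by simp
  qed
  also have "\<dots> = (\<integral>x. indicator (dcube k j) x * f x \<partial>M)"
    by (simp add: sum_distrib_right[symmetric] sum_ind)
  finally show ?thesis .
qed

lemma sum_children_meas: "(\<Sum>R\<in>dchildren k j. measure M R) = measure M (dcube k j)"
proof -
  have "(\<Sum>R\<in>dchildren k j. (\<integral>x. (indicator R x :: real) \<partial>M)) = (\<integral>x. (\<Sum>R\<in>dchildren k j. indicator R x) \<partial>M)"
  proof (rule Bochner_Integration.integral_sum[symmetric])
    fix R assume "R \<in> dchildren k j"
    then obtain j' where "R = dcube (k+1) j'" using child_cube by blast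
    then show "integrable M (indicator R :: _ \<Rightarrow> real)" using cube_ind_int by simp
  qed
  also have "\<dots> = (\<integral>x. (indicator (dcube k j) x :: real) \<partial>M)"
    by (simp only: sum_ind)
  finally show ?thesis by (simp add: spaceM)
qed

end



context
  fixes M :: "(real^'n::finite) measure"
  assumes borel: "sets M = sets borel"
    and pos: "\<And>k' j'. 0 < emeasure M (dcube k' j')"
    and fin: "\<And>k' j'. emeasure M (dcube k' j') < \<infinity>"
begin

lemma loc_abs: "loc_integrable M f \<Longrightarrow> loc_integrable M (\<lambda>x. \<bar>f x\<bar>)"
  unfolding loc_integrable_def using set_integrable_abs borel_measurable_abs by blast

lemma child_ind_int: "R \<in> dchildren k j \<Longrightarrow> integrable M (indicator R :: _ \<Rightarrow> real)"
  using child_cube[OF borel pos fin] cube_ind_int[OF borel pos fin] by blast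

lemma child_avg_bound: "R \<in> dchildren k j \<Longrightarrow> \<bar>avg M f R\<bar> * measure M R \<le> (\<integral>x. indicator R x * \<bar>f x\<bar> \<partial>M)"
  using child_cube[OF borel pos fin] avg_bound[OF borel pos fin] by blast

lemma child_ind_integral: "R \<in> dchildren k j \<Longrightarrow> integral\<^sup>L M (indicator R) = measure M R"
  by (simp add: spaceM[OF borel pos fin])

lemma part1:
  assumes f: "loc_integrable M f"
  shows "integrable M (mdiff M k j f) \<and>
     (\<integral>x. \<bar>mdiff M k j f x\<bar> \<partial>M) \<le> 2 * (\<integral>x. indicator (dcube k j) x * \<bar>f x\<bar> \<partial>M)"
proof -
  let ?Q = "dcube k j" let ?C = "dchildren k j"
  let ?I = "\<integral>x. indicator (dcube k j) x * \<bar>f x\<bar> \<partial>M"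
  have mf: "mdiff M k j f = (\<lambda>x. (\<Sum>R\<in>?C. avg M f R * indicator R x) - avg M f ?Q * indicator ?Q x)"
    by (simp add: mdiff_def condE_def fun_eq_iff)
  have iQ: "integrable M (indicator ?Q :: _ \<Rightarrow> real)" by (rule cube_ind_int[OF borel pos fin])
  have int1: "integrable M (mdiff M k j f)"
    unfolding mf
    by (intro Bochner_Integration.integrable_diff Bochner_Integration.integrable_sum integrable_mult_right child_ind_int iQ)
  define h where "h x = (\<Sum>R\<in>?C. \<bar>avg M f R\<bar> * indicator R x) + \<bar>avg M f ?Q\<bar> * indicator ?Q x" for x
  have inth: "integrable M h"
    unfolding h_def
    by (intro Bochner_Integration.integrable_add Bochner_Integration.integrable_sum integrable_mult_right child_ind_int iQ)
  have "(\<integral>x. \<bar>mdiff M k j f x\<bar> \<partial>M) \<le> integral\<^sup>L M h"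
  proof (rule integral_mono)
    show "integrable M (\<lambda>x. \<bar>mdiff M k j f x\<bar>)" using int1 by (rule integrable_abs)
    show "integrable M h" by (rule inth)
    fix x
    have "\<bar>mdiff M k j f x\<bar> \<le> \<bar>\<Sum>R\<in>?C. avg M f R * indicator R x\<bar> + \<bar>avg M f ?Q * indicator ?Q x\<bar>"
      unfolding mf by (rule abs_triangle_ineq4)
    also have "\<dots> \<le> (\<Sum>R\<in>?C. \<bar>avg M f R * indicator R x\<bar>) + \<bar>avg M f ?Q * indicator ?Q x\<bar>"
      using sum_abs by simp
    also have "\<dots> = h x" by (simp add: h_def abs_mult)
    finally show "\<bar>mdiff M k j f x\<bar> \<le> h x" .
  qed
  also have "integral\<^sup>L M h = (\<Sum>R\<in>?C. \<bar>avg M f R\<bar> * measure M R) + \<bar>avg M f ?Q\<bar> * measure M ?Q"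
  proof -
    have "integral\<^sup>L M h = (\<integral>x. (\<Sum>R\<in>?C. \<bar>avg M f R\<bar> * indicator R x) \<partial>M) + (\<integral>x. \<bar>avg M f ?Q\<bar> * indicator ?Q x \<partial>M)"
      unfolding h_def
      by (intro Bochner_Integration.integral_add Bochner_Integration.integrable_sum integrable_mult_right child_ind_int iQ)
    also have "(\<integral>x. (\<Sum>R\<in>?C. \<bar>avg M f R\<bar> * indicator R x) \<partial>M) = (\<Sum>R\<in>?C. (\<integral>x. \<bar>avg M f R\<bar> * indicator R x \<partial>M))"
      by (intro Bochner_Integration.integral_sum integrable_mult_right child_ind_int)
    also have "\<dots> = (\<Sum>R\<in>?C. \<bar>avg M f R\<bar> * measure M R)"
      by (intro sum.cong refl) (simp add: spaceM[OF borel pos fin])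
    also have "(\<integral>x. \<bar>avg M f ?Q\<bar> * indicator ?Q x \<partial>M) = \<bar>avg M f ?Q\<bar> * measure M ?Q"
      by (simp add: spaceM[OF borel pos fin])
    finally show ?thesis .
  qed
  also have "\<dots> \<le> (\<Sum>R\<in>?C. (\<integral>x. indicator R x * \<bar>f x\<bar> \<partial>M)) + ?I"
    by (intro add_mono sum_mono child_avg_bound avg_bound[OF borel pos fin])
  also have "(\<Sum>R\<in>?C. (\<integral>x. indicator R x * \<bar>f x\<bar> \<partial>M)) = ?I"
    by (rule sum_children_int[OF borel pos fin loc_abs[OF f]])
  finally show ?thesis using int1 by simp
qed


lemma prod_alt: "mdiff M' k j b y * mdiff M' k j f y =
  (\<Sum>R\<in>dchildren k j. ((avg M' b R - avg M' b (dcube k j)) * (avg M' f R - avg M' f (dcube k j))) * indicator R y)"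
proof (cases "y \<in> dcube k j")
  case True
  then obtain R0 where "R0 \<in> dchildren k j" "y \<in> R0" using children_cover by blast
  then show ?thesis unfolding mdiff_alt by (simp add: sum_ind_in)
next
  case False
  then show ?thesis unfolding mdiff_alt by (simp add: sum_ind_out)
qed

lemma prod_alt2: "indicator (dcube k j) y * (\<Sum>R\<in>dchildren k j. c R * indicator R y) = (\<Sum>R\<in>dchildren k j. c R * indicator R y :: real)"
  by (cases "y \<in> dcube k j") (simp_all add: sum_ind_out)

lemma avg_abs_nn: "0 \<le> avg M (\<lambda>y. \<bar>f y\<bar>) Q"
  unfolding avg_def by (intro divide_nonneg_nonneg integral_nonneg) auto

lemma part2:
  assumes f: "loc_integrable M f" and b: "in_BMO M b"
  shows "\<bar>condE M (dcube k j) (\<lambda>y. mdiff M k j b y * mdiff M k j f y) x\<bar>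
           \<le> 2 * bmo_norm M b * avg M (\<lambda>y. \<bar>f y\<bar>) (dcube k j)"
proof -
  let ?Q = "dcube k j" let ?C = "dchildren k j"
  let ?I = "\<integral>x. indicator (dcube k j) x * \<bar>f x\<bar> \<partial>M"
  let ?N = "bmo_norm M b"
  have bl: "loc_integrable M b" and bdd: "bdd_above (range (\<lambda>(k, j). bmo_osc M b k j))"
    using b by (auto simp: in_BMO_def)
  have osc_le: "bmo_osc M b k' j' \<le> ?N" for k' j'
    unfolding bmo_norm_def using cSUP_upper[OF UNIV_I bdd, of "(k',j')"] by simp
  have osc_nn: "0 \<le> bmo_osc M b k' j'" for k' j'
    unfolding bmo_osc_def by (intro divide_nonneg_nonneg integral_nonneg) auto
  have Nnn: "0 \<le> ?N" using osc_le[of k j] osc_nn[of k j] by linarith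
  have D: "\<bar>avg M b R - avg M b ?Q\<bar> \<le> ?N" if R: "R \<in> ?C" for R
  proof -
    obtain j' where j': "R = dcube (k+1) j'" "dparent (k+1) j' = ?Q" using children_parent[OF R] by blast
    let ?c = "avg M b ?Q"
    have mR: "0 < measure M R" using j' cube_meas[OF borel pos fin] by simp
    have iR: "integrable M (\<lambda>x. indicator R x * b x)" using j' cube_int[OF borel pos fin bl] by simp
    have iR1: "integrable M (\<lambda>x. ?c * indicator R x)" using child_ind_int[OF R] by (rule integrable_mult_right)
    have "(\<integral>x. indicator R x * (b x - ?c) \<partial>M) = (\<integral>x. indicator R x * b x - ?c * indicator R x \<partial>M)"
      by (simp add: algebra_simps)
    also have "\<dots> = (\<integral>x. indicator R x * b x \<partial>M) - (\<integral>x. ?c * indicator R x \<partial>M)"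
      using iR iR1 by (rule Bochner_Integration.integral_diff)
    also have "\<dots> = (avg M b R - ?c) * measure M R"
      using avg_mult[OF borel pos fin, of b "k+1" j'] j' by (simp add: spaceM[OF borel pos fin] algebra_simps)
    finally have e: "(\<integral>x. indicator R x * (b x - ?c) \<partial>M) = (avg M b R - ?c) * measure M R" .
    have "\<bar>avg M b R - ?c\<bar> * measure M R = \<bar>\<integral>x. indicator R x * (b x - ?c) \<partial>M\<bar>"
      using e mR by (simp add: abs_mult)
    also have "\<dots> \<le> (\<integral>x. \<bar>indicator R x * (b x - ?c)\<bar> \<partial>M)" by (rule integral_abs_bound)
    also have "\<dots> = (\<integral>x. indicator R x * \<bar>b x - ?c\<bar> \<partial>M)" by (simp add: abs_mult)
    finally have "\<bar>avg M b R - ?c\<bar> \<le> (\<integral>x. indicator R x * \<bar>b x - ?c\<bar> \<partial>M) / measure M R"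
      using mR by (simp add: pos_le_divide_eq)
    also have "\<dots> = bmo_osc M b (k+1) j'" unfolding bmo_osc_def using j' by simp
    finally show ?thesis using osc_le by (meson order_trans)
  qed
  show ?thesis
  proof (cases "x \<in> ?Q")
    case False
    then show ?thesis using Nnn avg_abs_nn[of f ?Q] by (simp add: condE_def)
  next
    case True
    define c where "c R = (avg M b R - avg M b ?Q) * (avg M f R - avg M f ?Q)" for R
    have mQ: "0 < measure M ?Q" by (rule cube_meas[OF borel pos fin])
    have "(\<integral>y. indicator ?Q y * (mdiff M k j b y * mdiff M k j f y) \<partial>M) = (\<integral>y. (\<Sum>R\<in>?C. c R * indicator R y) \<partial>M)"
      unfolding prod_alt c_def prod_alt2 by simp
    also have "\<dots> = (\<Sum>R\<in>?C. (\<integral>y. c R * indicator R y \<partial>M))"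
      by (intro Bochner_Integration.integral_sum integrable_mult_right child_ind_int)
    also have "\<dots> = (\<Sum>R\<in>?C. c R * measure M R)"
      by (intro sum.cong refl) (simp add: spaceM[OF borel pos fin])
    finally have e: "(\<integral>y. indicator ?Q y * (mdiff M k j b y * mdiff M k j f y) \<partial>M) = (\<Sum>R\<in>?C. c R * measure M R)" .
    have "\<bar>\<Sum>R\<in>?C. c R * measure M R\<bar> \<le> (\<Sum>R\<in>?C. \<bar>c R * measure M R\<bar>)" by (rule sum_abs)
    also have "\<dots> \<le> (\<Sum>R\<in>?C. ?N * (\<bar>avg M f R\<bar> * measure M R) + ?N * \<bar>avg M f ?Q\<bar> * measure M R)"
    proof (rule sum_mono)
      fix R assume R: "R \<in> ?C"
      have m: "0 \<le> measure M R" by simp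
      have "\<bar>c R\<bar> \<le> ?N * (\<bar>avg M f R\<bar> + \<bar>avg M f ?Q\<bar>)"
        unfolding c_def abs_mult
        by (intro mult_mono D[OF R] abs_triangle_ineq4 Nnn) auto
      then have "\<bar>c R\<bar> * measure M R \<le> ?N * (\<bar>avg M f R\<bar> + \<bar>avg M f ?Q\<bar>) * measure M R"
        using m by (rule mult_right_mono)
      then show "\<bar>c R * measure M R\<bar> \<le> ?N * (\<bar>avg M f R\<bar> * measure M R) + ?N * \<bar>avg M f ?Q\<bar> * measure M R"
        by (simp add: abs_mult algebra_simps)
    qed
    also have "\<dots> = ?N * (\<Sum>R\<in>?C. \<bar>avg M f R\<bar> * measure M R) + ?N * \<bar>avg M f ?Q\<bar> * (\<Sum>R\<in>?C. measure M R)"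
      by (simp add: sum.distrib sum_distrib_left)
    also have "\<dots> = ?N * (\<Sum>R\<in>?C. \<bar>avg M f R\<bar> * measure M R) + ?N * (\<bar>avg M f ?Q\<bar> * measure M ?Q)"
      by (simp add: sum_children_meas[OF borel pos fin])
    also have "\<dots> \<le> ?N * ?I + ?N * ?I"
    proof (intro add_mono mult_left_mono Nnn avg_bound[OF borel pos fin])
      have "(\<Sum>R\<in>?C. \<bar>avg M f R\<bar> * measure M R) \<le> (\<Sum>R\<in>?C. (\<integral>x. indicator R x * \<bar>f x\<bar> \<partial>M))"
        by (intro sum_mono child_avg_bound)
      also have "\<dots> = ?I" by (rule sum_children_int[OF borel pos fin loc_abs[OF f]])
      finally show "(\<Sum>R\<in>?C. \<bar>avg M f R\<bar> * measure M R) \<le> ?I" .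
    qed
    finally have bnd: "\<bar>\<Sum>R\<in>?C. c R * measure M R\<bar> \<le> 2 * ?N * ?I" by simp
    have "\<bar>condE M ?Q (\<lambda>y. mdiff M k j b y * mdiff M k j f y) x\<bar> = \<bar>\<Sum>R\<in>?C. c R * measure M R\<bar> / measure M ?Q"
      using True e mQ by (simp add: condE_def avg_def)
    also have "\<dots> \<le> 2 * ?N * ?I / measure M ?Q"
      using bnd mQ by (simp add: divide_right_mono)
    also have "\<dots> = 2 * ?N * avg M (\<lambda>y. \<bar>f y\<bar>) ?Q" by (simp add: avg_def)
    finally show ?thesis .
  qed
qed

end

theorem mainTheorem7:
  fixes M :: "(real^'n::finite) measure"
    and f b :: "real^'n \<Rightarrow> real" and k :: int and j :: "'n \<Rightarrow> int"
  assumes borel: "sets M = sets borel"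
    and pos: "\<And>k' j'. 0 < emeasure M (dcube k' j')"
    and fin: "\<And>k' j'. emeasure M (dcube k' j') < \<infinity>"
    and f: "loc_integrable M f"
  shows "integrable M (mdiff M k j f) \<and>
         (\<integral>x. \<bar>mdiff M k j f x\<bar> \<partial>M) \<le> 2 * (\<integral>x. indicator (dcube k j) x * \<bar>f x\<bar> \<partial>M) \<and>
         (in_BMO M b \<longrightarrow> (\<forall>x.
         \<bar>condE M (dcube k j) (\<lambda>y. mdiff M k j b y * mdiff M k j f y) x\<bar>
           \<le> 2 * bmo_norm M b * avg M (\<lambda>y. \<bar>f y\<bar>) (dcube k j)))"
  using part1[OF borel pos fin f] part2[OF borel pos fin f] by blast

end
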